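(* Let $D=(D_1,D_2)$ with $D_1\in\mathcal{U}(n,s_1\cdots s_p)$ and $D_2\in\mathcal{U}(n,s_{p+1}\cdots s_{p+q})$, and assume $s_{p+1},\dots,s_t$ are odd and $s_{t+1},\dots,s_{p+q}$ are even, where $p\le t\le p+q$. Then $\mathrm{QQD}^2(D)\ge \mathrm{LB}_1$, where \begin{align*}\mathrm{LB}_1=&\;C+\frac1n\left(\frac32\right)^{p+q}+\frac{n-1}{n}\left(\frac54\right)^p\left(\frac65\right)^{\sum_{k=1}^p\frac{n-s_k}{s_k(n-1)}}\left(\frac32\right)^{\sum_{k=p+1}^{p+q}\frac{n-s_k}{s_k(n-1)}}\left(\frac54\right)^{\sum_{k=t+1}^{p+q}\frac{n}{s_k(n-1)}}\\&\times\prod_{k=p+1}^{t}\prod_{i=1}^{(s_k-1)/2}\left(\frac32-\frac{2i(2s_k-2i)}{4s_k^2}\right)^{\frac{2n}{s_k(n-1)}}\prod_{k=t+1}^{p+q}\prod_{i=1}^{(s_k/2)-1}\left(\frac32-\frac{2i(2s_k-2i)}{4s_k^2}\right)^{\frac{2n}{s_k(n-1)}},\end{align*} and $C=-\prod_{k=1}^{p}\left(\frac{5s_k+1}{4s_k}\right)\left(\frac43\right)^q$.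
   Context: A U-type design in $\mathcal{U}(n,s_1\cdots s_m)$ is an $n\times m$ matrix whose $k$th column takes each value in $\{0,\dots,s_k-1\}$ equally often. $D=(D_1,D_2)$ has $p$ qualitative columns ($D_1$) followed by $q$ quantitative columns ($D_2$). For quantitative columns a level $x$ is transformed to $(2x+1)/(2s_k)\in[0,1]$. Let $\chi=\prod_k\chi_k$, $\chi_k=\{0,\dots,s_k-1\}$ for $k\le p$, $\chi_k=[0,1]$ for $k>p$, and $F$ the uniform distribution on $\chi$. Kernel: $\mathcal{K}(t,z)=\prod_k\mathcal{K}_k(t_k,z_k)$ with $\mathcal{K}_k=(3/2)^{\delta_{t_kz_k}}(5/4)^{1-\delta_{t_kz_k}}$ for $k\le p$ ($\delta$ the Kronecker delta) and $\mathcal{K}_k=\frac32-|t_k-z_k|+|t_k-z_k|^2$ for $k>p$. For $D$ with (transformed) rows $x_1,\dots,x_n$, the squared qualitative-quantitative discrepancy is $\mathrm{QQD}^2(D)=\int_{\chi^2}\mathcal{K}\,dF\,dF-\frac2n\sum_i\int_\chi\mathcal{K}(t,x_i)dF(t)+\frac1{n^2}\sum_{i,j}\mathcal{K}(x_i,x_j)$. Empty sums are $0$ and empty products are $1$. *)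

theory Defs
  imports "HOL-Probability.Probability"
begin

text \<open>Columns are indexed 0-based: column k (k < m) of the paper's column k+1.
  A design is a function D i k (row i < n, column k < m) with levels s k.\<close>

definition U_type :: "nat \<Rightarrow> nat \<Rightarrow> (nat \<Rightarrow> nat) \<Rightarrow> (nat \<Rightarrow> nat \<Rightarrow> nat) \<Rightarrow> bool" where
  "U_type n m s D \<longleftrightarrow>
     (\<forall>k<m. (\<forall>i<n. D i k < s k) \<and>
            (\<forall>u<s k. \<forall>v<s k. card {i. i < n \<and> D i k = u} = card {i. i < n \<and> D i k = v}))"

text \<open>Factor measures: uniform on the levels {0,..,s_k-1} (embedded in the reals) for
  qualitative columns k < p, uniform on [0,1] for quantitative columns.\<close>
definition chi_factor :: "(nat \<Rightarrow> nat) \<Rightarrow> nat \<Rightarrow> nat \<Rightarrow> real measure" where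
  "chi_factor s p k =
     (if k < p then measure_pmf (pmf_of_set (real ` {0..<s k}))
      else uniform_measure lborel {0..1::real})"

definition F_measure :: "(nat \<Rightarrow> nat) \<Rightarrow> nat \<Rightarrow> nat \<Rightarrow> (nat \<Rightarrow> real) measure" where
  "F_measure s p m = PiM {..<m} (chi_factor s p)"

definition QQ_kernel :: "nat \<Rightarrow> nat \<Rightarrow> (nat \<Rightarrow> real) \<Rightarrow> (nat \<Rightarrow> real) \<Rightarrow> real" where
  "QQ_kernel p m t z =
     (\<Prod>k<m. if k < p then (if t k = z k then 3/2 else 5/4)
             else 3/2 - \<bar>t k - z k\<bar> + \<bar>t k - z k\<bar>^2)"

definition transformed_row :: "(nat \<Rightarrow> nat) \<Rightarrow> nat \<Rightarrow> (nat \<Rightarrow> nat \<Rightarrow> nat) \<Rightarrow> nat \<Rightarrow> nat \<Rightarrow> real" where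
  "transformed_row s p D i k =
     (if k < p then real (D i k) else (2 * real (D i k) + 1) / (2 * real (s k)))"

definition QQD2 :: "nat \<Rightarrow> nat \<Rightarrow> nat \<Rightarrow> (nat \<Rightarrow> nat) \<Rightarrow> (nat \<Rightarrow> nat \<Rightarrow> nat) \<Rightarrow> real" where
  "QQD2 n p q s D =
     (let m = p + q; F = F_measure s p m; K = QQ_kernel p m; x = transformed_row s p D in
        (\<integral>t. (\<integral>z. K t z \<partial>F) \<partial>F)
        - 2 / real n * (\<Sum>i<n. \<integral>t. K t (x i) \<partial>F)
        + 1 / (real n)^2 * (\<Sum>i<n. \<Sum>j<n. K (x i) (x j)))"

definition LB1 :: "nat \<Rightarrow> nat \<Rightarrow> nat \<Rightarrow> nat \<Rightarrow> (nat \<Rightarrow> nat) \<Rightarrow> real" where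
  "LB1 n p q t s =
     (let C = - (\<Prod>k<p. (5 * real (s k) + 1) / (4 * real (s k))) * (4/3)^q;
          e = (\<lambda>k. (real n - real (s k)) / (real (s k) * (real n - 1)));
          g = (\<lambda>k i. (3/2 - 2 * real i * (2 * real (s k) - 2 * real i) / (4 * (real (s k))^2))
                      powr (2 * real n / (real (s k) * (real n - 1))))
      in C + 1 / real n * (3/2)^(p+q)
         + (real n - 1) / real n * (5/4)^p
           * (6/5) powr (\<Sum>k<p. e k)
           * (3/2) powr (\<Sum>k\<in>{p..<p+q}. e k)
           * (5/4) powr (\<Sum>k\<in>{t..<p+q}. real n / (real (s k) * (real n - 1)))
           * (\<Prod>k\<in>{p..<t}. \<Prod>i\<in>{1..(s k - 1) div 2}. g k i)
           * (\<Prod>k\<in>{t..<p+q}. \<Prod>i\<in>{1..s k div 2 - 1}. g k i))"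

end

theory Submission
  imports Defs
begin

lemma deriv_xabs: "((\<lambda>x::real. x * \<bar>x\<bar>) has_real_derivative 2 * \<bar>x\<bar>) (at x)"
proof (cases "x = 0")
  case True
  have "((\<lambda>h::real. ((0 + h) * \<bar>0 + h\<bar> - 0 * \<bar>0\<bar>) / h) \<longlongrightarrow> 0) (at 0)"
  proof -
    have "((\<lambda>h::real. \<bar>h\<bar>) \<longlongrightarrow> \<bar>0\<bar>) (at 0)"
      by (intro tendsto_intros)
    moreover have "(\<lambda>h::real. ((0 + h) * \<bar>0 + h\<bar> - 0 * \<bar>0\<bar>) / h) = (\<lambda>h. \<bar>h\<bar>)"
    proof
      fix h :: real
      show "((0 + h) * \<bar>0 + h\<bar> - 0 * \<bar>0\<bar>) / h = \<bar>h\<bar>"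
        by (cases "h = 0") simp_all
    qed
    ultimately show ?thesis by simp
  qed
  then show ?thesis using True by (simp add: DERIV_def)
next
  case False
  show ?thesis
  proof (cases "x > 0")
    case True
    have "((\<lambda>x::real. x * x) has_real_derivative 2 * \<bar>x\<bar>) (at x)"
      using True by (auto intro!: derivative_eq_intros)
    then show ?thesis
      by (rule has_field_derivative_transform_within_open[where S="{0<..}"]) (use True in auto)
  next
    case False
    with \<open>x \<noteq> 0\<close> have neg: "x < 0" by simp
    have "((\<lambda>x::real. - (x * x)) has_real_derivative 2 * \<bar>x\<bar>) (at x)"
      using neg by (auto intro!: derivative_eq_intros)
    then show ?thesis
      by (rule has_field_derivative_transform_within_open[where S="{..<0}"]) (use neg in auto)
  qed
qed

lemma uniform01_eq: "uniform_measure lborel {0..1::real} = density lborel (\<lambda>x. ennreal (indicator {0..1} x))"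
  unfolding uniform_measure_def by (intro density_cong) (auto simp: indicator_def)

lemma int_uniform01:
  fixes f :: "real \<Rightarrow> real"
  assumes "f \<in> borel_measurable borel"
  shows "(\<integral>z. f z \<partial>uniform_measure lborel {0..1}) = (\<integral>z. indicator {0..1} z *\<^sub>R f z \<partial>lborel)"
  unfolding uniform01_eq using assms by (subst integral_density) auto

lemma quant_int:
  fixes a :: real
  assumes "0 \<le> a" "a \<le> 1"
  shows "(\<integral>z. 3/2 - \<bar>z - a\<bar> + \<bar>z - a\<bar>^2 \<partial>uniform_measure lborel {0..1}) = 4/3"
proof -
  define F where "F z = 3/2 * z - (z - a) * \<bar>z - a\<bar> / 2 + (z - a)^3 / 3" for z :: real
  have d: "(F has_real_derivative (3/2 - \<bar>z - a\<bar> + \<bar>z - a\<bar>^2)) (at z)" for z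
  proof -
    have "((\<lambda>z. (z - a) * \<bar>z - a\<bar>) has_real_derivative 2 * \<bar>z - a\<bar> * 1) (at z)"
      by (rule DERIV_chain2[OF deriv_xabs]) (auto intro!: derivative_eq_intros)
    then have x: "((\<lambda>z. (z - a) * \<bar>z - a\<bar> / 2) has_real_derivative 2 * \<bar>z - a\<bar> * 1 / 2) (at z)"
      by (rule DERIV_cdivide)
    have y: "((\<lambda>z. 3/2 * z) has_real_derivative 3/2) (at z)"
      by (auto intro!: derivative_eq_intros)
    have w: "((\<lambda>z. (z - a)^3 / 3) has_real_derivative (z - a)^2) (at z)"
      by (auto intro!: derivative_eq_intros simp: power2_eq_square)
    have "(F has_real_derivative (3/2 - 2 * \<bar>z - a\<bar> * 1 / 2 + (z - a)^2)) (at z)"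
      unfolding F_def by (rule DERIV_add[OF DERIV_diff[OF y x] w])
    then show ?thesis by (simp add: power2_abs)
  qed
  have dv: "(F has_vector_derivative (3/2 - \<bar>z - a\<bar> + \<bar>z - a\<bar>^2)) (at z within {0..1})" for z
    using has_real_derivative_iff_has_vector_derivative[THEN iffD1, OF DERIV_subset[OF d]] by blast
  have "(\<integral>z. 3/2 - \<bar>z - a\<bar> + \<bar>z - a\<bar>^2 \<partial>uniform_measure lborel {0..1})
      = (\<integral>z. indicator {0..1} z *\<^sub>R (3/2 - \<bar>z - a\<bar> + \<bar>z - a\<bar>^2) \<partial>lborel)"
    by (rule int_uniform01) measurable
  also have "\<dots> = F 1 - F 0"
    by (rule integral_FTC_atLeastAtMost[OF _ dv]) (auto intro!: continuous_intros)
  also have "\<dots> = 4/3"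
    using assms by (simp add: F_def power2_eq_square power3_eq_cube abs_of_nonneg abs_of_nonpos) (simp add: field_simps)
  finally show ?thesis .
qed

lemma qual_sum:
  fixes A :: "real set"
  assumes "finite A" "a \<in> A"
  shows "(\<Sum>b\<in>A. (if b = a then u else v)) = u + (real (card A) - 1) * v"
proof -
  have "(\<Sum>b\<in>A. (if b = a then u else v)) = (\<Sum>b\<in>A. v + (if b = a then u - v else 0))"
    by (intro sum.cong) auto
  also have "\<dots> = real (card A) * v + (u - v)"
    using assms by (simp add: sum.distrib)
  finally show ?thesis by (simp add: algebra_simps)
qed

lemma qual_int:
  assumes "0 < s" "a \<in> real ` {0..<s}"
  shows "(\<integral>z. (if z = a then 3/2 else 5/4) \<partial>measure_pmf (pmf_of_set (real ` {0..<s}))) = (5 * real s + 1) / (4 * real s)"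
proof -
  let ?A = "real ` {0..<s}"
  have ne: "?A \<noteq> {}" "finite ?A" using assms by auto
  have card: "card ?A = s" by (simp add: card_image)
  have "(\<integral>z. (if z = a then 3/2 else 5/4::real) \<partial>measure_pmf (pmf_of_set ?A))
      = (\<Sum>b\<in>?A. pmf (pmf_of_set ?A) b *\<^sub>R (if b = a then 3/2 else 5/4))"
    by (rule integral_measure_pmf[OF ne(2)]) (use ne in auto)
  also have "\<dots> = (\<Sum>b\<in>?A. (1 / real s) * (if b = a then 3/2 else 5/4))"
    using ne card by (intro sum.cong) auto
  also have "\<dots> = (1 / real s) * (3/2 + (real s - 1) * (5/4))"
    by (subst sum_distrib_left[symmetric], subst qual_sum) (use assms card in auto)
  also have "\<dots> = (5 * real s + 1) / (4 * real s)"
    using assms by (simp add: field_simps)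
  finally show ?thesis .
qed

abbreviation U01 :: "real measure" where "U01 \<equiv> uniform_measure lborel {0..1::real}"

lemma prob_U01: "prob_space U01"
  by (rule prob_space_uniform_measure) auto

lemma sets_U01[simp, measurable_cong]: "sets U01 = sets borel"
  by simp

lemma integrable_U01:
  fixes f :: "real \<Rightarrow> real"
  assumes "continuous_on UNIV f"
  shows "integrable U01 f"
proof -
  have m: "f \<in> borel_measurable borel"
    using assms by (rule borel_measurable_continuous_onI)
  have "integrable lborel (\<lambda>x. indicator {0..1} x *\<^sub>R f x)"
    using borel_integrable_atLeastAtMost'[of 0 1 f] continuous_on_subset[OF assms]
    unfolding set_integrable_def by auto
  then show ?thesis
    unfolding uniform01_eq using m
    by (subst integrable_density) auto
qed

lemma prob_chi: "prob_space (chi_factor s p k)"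
  unfolding chi_factor_def using prob_U01 by (auto simp: measure_pmf.prob_space_axioms)

lemma G_meas: "(\<lambda>a::real. \<integral>w. 3/2 - \<bar>a - w\<bar> + \<bar>a - w\<bar>^2 \<partial>U01) \<in> borel_measurable U01"
proof -
  interpret P: prob_space U01 by (rule prob_U01)
  show ?thesis
    by (rule P.borel_measurable_lebesgue_integral) measurable
qed

lemma PP: "product_prob_space (chi_factor s p)"
  unfolding product_prob_space_def product_prob_space_axioms_def product_sigma_finite_def
  using prob_chi prob_space_imp_sigma_finite by blast

lemma quant_int': assumes "0 \<le> a" "a \<le> 1" shows "(\<integral>w. 3/2 - \<bar>a - w\<bar> + \<bar>a - w\<bar>^2 \<partial>U01) = 4/3"
proof -
  have "(\<lambda>w. 3/2 - \<bar>a - w\<bar> + \<bar>a - w\<bar>^2) = (\<lambda>w::real. 3/2 - \<bar>w - a\<bar> + \<bar>w - a\<bar>^2)"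
    by (intro ext) (simp only: abs_minus_commute[of a])
  note eq = this
  show ?thesis unfolding eq by (rule quant_int[OF assms])
qed

lemma qual_int': assumes "0 < s" "a \<in> real ` {0..<s}" shows
   "(\<integral>w. (if a = w then 3/2 else 5/4) \<partial>measure_pmf (pmf_of_set (real ` {0..<s}))) = (5 * real s + 1) / (4 * real s)"
proof -
  have "(\<lambda>w. (if a = w then 3/2 else 5/4::real)) = (\<lambda>w. if w = a then 3/2 else 5/4)"
    by (intro ext) auto
  note eq = this
  show ?thesis unfolding eq by (rule qual_int[OF assms])
qed

lemma factor_integrable:
  assumes "k < p \<Longrightarrow> 0 < s k"
  shows "integrable (chi_factor s p k)
     (\<lambda>w. if k < p then (if a = w then 3/2 else 5/4) else 3/2 - \<bar>a - w\<bar> + \<bar>a - w\<bar>^2)"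
proof (cases "k < p")
  case True
  have "integrable (measure_pmf (pmf_of_set (real ` {0..<s k}))) (f::real\<Rightarrow>real)" for f
    using assms True by (intro integrable_measure_pmf_finite) simp
  then show ?thesis using True unfolding chi_factor_def by simp
next
  case False
  have "integrable U01 (\<lambda>w. 3/2 - \<bar>a - w\<bar> + \<bar>a - w\<bar>^2)"
    by (intro integrable_U01 continuous_intros)
  then show ?thesis using False unfolding chi_factor_def by simp
qed

lemma factor_integrable':
  assumes "k < p \<Longrightarrow> 0 < s k"
  shows "integrable (chi_factor s p k)
     (\<lambda>w. if k < p then (if w = a then 3/2 else 5/4) else 3/2 - \<bar>w - a\<bar> + \<bar>w - a\<bar>^2)"
proof (cases "k < p")
  case True
  have "integrable (measure_pmf (pmf_of_set (real ` {0..<s k}))) (f::real\<Rightarrow>real)" for f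
    using assms True by (intro integrable_measure_pmf_finite) simp
  then show ?thesis using True unfolding chi_factor_def by simp
next
  case False
  have "integrable U01 (\<lambda>w. 3/2 - \<bar>w - a\<bar> + \<bar>w - a\<bar>^2)"
    by (intro integrable_U01 continuous_intros)
  then show ?thesis using False unfolding chi_factor_def by simp
qed

lemma I2:
  fixes x :: "nat \<Rightarrow> real"
  assumes pos: "\<And>k. k < m \<Longrightarrow> k < p \<Longrightarrow> 0 < s k \<and> x k \<in> real ` {0..<s k}"
      and qn: "\<And>k. k < m \<Longrightarrow> \<not> k < p \<Longrightarrow> x k \<in> {0..1}"
  shows "(\<integral>t. QQ_kernel p m t x \<partial>F_measure s p m)
     = (\<Prod>k<m. if k < p then (5 * real (s k) + 1) / (4 * real (s k)) else 4/3)"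
proof -
  interpret PP: product_prob_space "chi_factor s p" by (rule PP)
  have pos': "\<And>k. k < m \<Longrightarrow> k < p \<Longrightarrow> 0 < s k" using pos by blast
  define f where "f k w = (if k < p then (if w = x k then 3/2 else 5/4) else 3/2 - \<bar>w - x k\<bar> + \<bar>w - x k\<bar>^2)" for k w
  have "(\<integral>t. QQ_kernel p m t x \<partial>F_measure s p m) = (\<integral>t. (\<Prod>k\<in>{..<m}. f k (t k)) \<partial>Pi\<^sub>M {..<m} (chi_factor s p))"
    by (simp only: QQ_kernel_def F_measure_def f_def)
  also have "\<dots> = (\<Prod>k\<in>{..<m}. integral\<^sup>L (chi_factor s p k) (f k))"
    apply (rule PP.product_integral_prod)
     apply simp
    unfolding f_def
    apply (rule factor_integrable')
    using pos' by simp
  also have "\<dots> = (\<Prod>k<m. if k < p then (5 * real (s k) + 1) / (4 * real (s k)) else 4/3)"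
  proof (rule prod.cong[OF refl])
    fix k assume k: "k \<in> {..<m}"
    show "integral\<^sup>L (chi_factor s p k) (f k) = (if k < p then (5 * real (s k) + 1) / (4 * real (s k)) else 4/3)"
    proof (cases "k < p")
      case True
      then show ?thesis using pos[of k] k unfolding f_def chi_factor_def
        by (simp add: qual_int)
    next
      case False
      then show ?thesis using qn[of k] k quant_int[of "x k"] unfolding f_def chi_factor_def
        by simp
    qed
  qed
  finally show ?thesis .
qed

lemma I1:
  assumes pos: "\<And>k. k < m \<Longrightarrow> k < p \<Longrightarrow> 0 < s k"
  shows "(\<integral>t. (\<integral>z. QQ_kernel p m t z \<partial>F_measure s p m) \<partial>F_measure s p m)
     = (\<Prod>k<m. if k < p then (5 * real (s k) + 1) / (4 * real (s k)) else 4/3)"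
proof -
  interpret PP: product_prob_space "chi_factor s p" by (rule PP)
  define g where "g k (a::real) w = (if k < p then (if a = w then 3/2 else 5/4) else 3/2 - \<bar>a - w\<bar> + \<bar>a - w\<bar>^2)" for k a w
  define G where "G k a = integral\<^sup>L (chi_factor s p k) (g k a)" for k a
  define c where "c k = (if k < p then (5 * real (s k) + 1) / (4 * real (s k)) else 4/3)" for k
  have inner: "(\<integral>z. QQ_kernel p m t z \<partial>F_measure s p m) = (\<Prod>k\<in>{..<m}. G k (t k))" for t
  proof -
    have "(\<integral>z. QQ_kernel p m t z \<partial>F_measure s p m) = (\<integral>z. (\<Prod>k\<in>{..<m}. g k (t k) (z k)) \<partial>Pi\<^sub>M {..<m} (chi_factor s p))"
      unfolding QQ_kernel_def F_measure_def g_def by simp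
    also have "\<dots> = (\<Prod>k\<in>{..<m}. G k (t k))"
      unfolding G_def
      by (rule PP.product_integral_prod) (auto simp: g_def intro!: factor_integrable pos)
    finally show ?thesis .
  qed
  have AEc: "AE a in chi_factor s p k. G k a = c k" if k: "k < m" for k
  proof (cases "k < p")
    case True
    then show ?thesis using pos[OF k]
      unfolding G_def g_def c_def chi_factor_def
      by (auto simp: AE_measure_pmf_iff qual_int')
  next
    case False
    have "AE a in U01. (\<integral>w. 3/2 - \<bar>a - w\<bar> + \<bar>a - w\<bar>^2 \<partial>U01) = 4/3"
      by (rule AE_uniform_measureI) (simp, rule AE_I2, use quant_int' in auto)
    then show ?thesis using False
      unfolding G_def g_def c_def chi_factor_def by simp
  qed
  have Gmeas: "G k \<in> borel_measurable (chi_factor s p k)" for k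
  proof (cases "k < p")
    case True
    then show ?thesis unfolding chi_factor_def by simp
  next
    case False
    then show ?thesis unfolding G_def g_def chi_factor_def using G_meas by simp
  qed
  have Gint: "integral\<^sup>L (chi_factor s p k) (G k) = c k" if k: "k < m" for k
  proof -
    interpret P: prob_space "chi_factor s p k" by (rule prob_chi)
    have "integral\<^sup>L (chi_factor s p k) (G k) = integral\<^sup>L (chi_factor s p k) (\<lambda>_. c k)"
      by (rule integral_cong_AE[OF Gmeas borel_measurable_const AEc[OF k]])
    also have "\<dots> = c k" using prob_space.prob_space[OF prob_chi[of s p k]] by simp
    finally show ?thesis .
  qed
  have Gintegrable: "integrable (chi_factor s p k) (G k)" if k: "k < m" for k
  proof -
    interpret P: prob_space "chi_factor s p k" by (rule prob_chi)
    show ?thesis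
      by (rule integrable_cong_AE[OF Gmeas borel_measurable_const AEc[OF k], THEN iffD2])
         (rule finite_measure.integrable_const[OF prob_space.finite_measure[OF prob_chi]])
  qed
  have "(\<integral>t. (\<integral>z. QQ_kernel p m t z \<partial>F_measure s p m) \<partial>F_measure s p m)
      = (\<integral>t. (\<Prod>k\<in>{..<m}. G k (t k)) \<partial>Pi\<^sub>M {..<m} (chi_factor s p))"
    unfolding F_measure_def[symmetric] by (rule Bochner_Integration.integral_cong[OF refl inner])
  also have "\<dots> = (\<Prod>k\<in>{..<m}. integral\<^sup>L (chi_factor s p k) (G k))"
    by (rule PP.product_integral_prod) (auto intro!: Gintegrable)
  also have "\<dots> = (\<Prod>k<m. c k)"
    by (rule prod.cong) (auto simp: Gint)
  finally show ?thesis unfolding c_def .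
qed

lemma sum_if_eq_card:
  fixes d :: "nat \<Rightarrow> nat" and c :: real
  shows "(\<Sum>i<n. if d i = b then c else 0) = c * real (card {i. i < n \<and> d i = b})"
proof -
  have "(\<Sum>i<n. if d i = b then c else 0) = (\<Sum>i\<in>{i. i < n \<and> d i = b}. c)"
    by (rule sum.mono_neutral_cong_right) auto
  then show ?thesis by simp
qed

lemma bal_sum:
  fixes d :: "nat \<Rightarrow> nat" and g :: "nat \<Rightarrow> real"
  assumes lt: "\<forall>i<n. d i < S"
    and bal: "\<forall>u<S. \<forall>v<S. card {i. i < n \<and> d i = u} = card {i. i < n \<and> d i = v}"
    and S: "0 < S"
  shows "(\<Sum>i<n. g (d i)) = real (card {i. i < n \<and> d i = 0}) * (\<Sum>b<S. g b)"
proof -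
  have "(\<Sum>i<n. g (d i)) = (\<Sum>i<n. \<Sum>b<S. if d i = b then g b else 0)"
  proof (rule sum.cong[OF refl])
    fix i assume "i \<in> {..<n}"
    then have "d i \<in> {..<S}" using lt by simp
    then show "g (d i) = (\<Sum>b<S. if d i = b then g b else 0)"
      by (simp add: sum.delta)
  qed
  also have "\<dots> = (\<Sum>b<S. \<Sum>i<n. if d i = b then g b else 0)"
    by (rule sum.swap)
  also have "\<dots> = (\<Sum>b<S. g b * real (card {i. i < n \<and> d i = b}))"
    by (simp only: sum_if_eq_card)
  also have "\<dots> = (\<Sum>b<S. g b * real (card {i. i < n \<and> d i = 0}))"
  proof (rule sum.cong[OF refl])
    fix b assume "b \<in> {..<S}"
    then have "card {i. i < n \<and> d i = b} = card {i. i < n \<and> d i = 0}"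
      using bal[rule_format, of b 0] S by simp
    then show "g b * real (card {i. i < n \<and> d i = b}) = g b * real (card {i. i < n \<and> d i = 0})"
      by simp
  qed
  finally show ?thesis by (simp add: sum_distrib_right mult.commute)
qed

lemma bal_n:
  fixes d :: "nat \<Rightarrow> nat"
  assumes lt: "\<forall>i<n. d i < S"
    and bal: "\<forall>u<S. \<forall>v<S. card {i. i < n \<and> d i = u} = card {i. i < n \<and> d i = v}"
    and S: "0 < S"
  shows "real n = real (card {i. i < n \<and> d i = 0}) * real S"
  using bal_sum[OF lt bal S, of "\<lambda>_. 1"] by simp

lemma bal_sum2:
  fixes d :: "nat \<Rightarrow> nat" and h :: "nat \<Rightarrow> nat \<Rightarrow> real"
  assumes lt: "\<forall>i<n. d i < S"
    and bal: "\<forall>u<S. \<forall>v<S. card {i. i < n \<and> d i = u} = card {i. i < n \<and> d i = v}"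
    and S: "0 < S"
  shows "(\<Sum>i<n. \<Sum>j<n. h (d i) (d j)) = (real (card {i. i < n \<and> d i = 0}))^2 * (\<Sum>a<S. \<Sum>b<S. h a b)"
proof -
  let ?c = "real (card {i. i < n \<and> d i = 0})"
  have "(\<Sum>i<n. \<Sum>j<n. h (d i) (d j)) = (\<Sum>i<n. ?c * (\<Sum>b<S. h (d i) b))"
    by (intro sum.cong refl bal_sum[OF lt bal S])
  also have "\<dots> = ?c * (\<Sum>i<n. (\<Sum>b<S. h (d i) b))"
    by (simp add: sum_distrib_left)
  also have "(\<Sum>i<n. (\<Sum>b<S. h (d i) b)) = ?c * (\<Sum>a<S. \<Sum>b<S. h a b)"
    by (rule bal_sum[OF lt bal S])
  finally show ?thesis by (simp add: power2_eq_square)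
qed

definition Off :: "nat \<Rightarrow> (nat \<times> nat) set" where
  "Off n = Sigma {..<n} (\<lambda>i. {..<n} - {i})"

lemma finite_Off: "finite (Off n)" unfolding Off_def by auto

lemma card_Off: "card (Off n) = n * (n - 1)"
  unfolding Off_def by (simp add: card_Diff_singleton)

lemma sum_Off:
  fixes f :: "nat \<Rightarrow> nat \<Rightarrow> real"
  shows "(\<Sum>(i,j)\<in>Off n. f i j) = (\<Sum>i<n. \<Sum>j<n. f i j) - (\<Sum>i<n. f i i)"
proof -
  have "(\<Sum>(i,j)\<in>Off n. f i j) = (\<Sum>i<n. \<Sum>j\<in>{..<n} - {i}. f i j)"
    unfolding Off_def by (rule sum.Sigma[symmetric]) auto
  also have "\<dots> = (\<Sum>i<n. (\<Sum>j<n. f i j) - f i i)"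
    by (intro sum.cong refl) (simp add: sum_diff1)
  finally show ?thesis by (simp add: sum_subtractf)
qed

lemma col_Off:
  fixes d :: "nat \<Rightarrow> nat" and h :: "nat \<Rightarrow> nat \<Rightarrow> real"
  assumes lt: "\<forall>i<n. d i < S"
    and bal: "\<forall>u<S. \<forall>v<S. card {i. i < n \<and> d i = u} = card {i. i < n \<and> d i = v}"
    and S: "0 < S"
  shows "(\<Sum>(i,j)\<in>Off n. h (d i) (d j)) = (real (card {i. i < n \<and> d i = 0}))^2 * (\<Sum>a<S. \<Sum>b<S. h a b)
          - real (card {i. i < n \<and> d i = 0}) * (\<Sum>a<S. h a a)"
  unfolding sum_Off[of "\<lambda>i j. h (d i) (d j)"] bal_sum2[OF lt bal S]
  using bal_sum[OF lt bal S, of "\<lambda>a. h a a"] by simp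

lemma jensen_exp:
  fixes y :: "'a \<Rightarrow> real"
  assumes "finite A" "A \<noteq> {}" "\<And>i. i \<in> A \<Longrightarrow> 0 < y i"
  shows "exp ((\<Sum>i\<in>A. ln (y i)) / real (card A)) \<le> (\<Sum>i\<in>A. y i) / real (card A)"
proof -
  have c: "0 < real (card A)" using assms by (simp add: card_gt_0_iff)
  have "exp (\<Sum>i\<in>A. (1 / real (card A)) *\<^sub>R ln (y i)) \<le> (\<Sum>i\<in>A. (1 / real (card A)) * exp (ln (y i)))"
    by (rule convex_on_sum[OF assms(1,2) exp_convex]) (use c in auto)
  also have "\<dots> = (\<Sum>i\<in>A. y i) / real (card A)"
    using assms(3) by (simp add: sum_divide_distrib)
  finally show ?thesis by (simp add: sum_divide_distrib)
qed

lemma mod_helper1: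
  fixes a b S :: nat
  assumes "a < S" "b < S"
  shows "(b + S - a) mod S = (if a \<le> b then b - a else b + S - a)"
proof (cases "a \<le> b")
  case True
  have "b + S - a = (b - a) + S" using True by simp
  then have "(b + S - a) mod S = (b - a) mod S" by simp
  also have "\<dots> = b - a" using assms by (intro mod_less) simp
  finally show ?thesis using True by simp
next
  case False
  then show ?thesis using assms by (intro trans[OF mod_less]) auto
qed

lemma mod_helper2:
  fixes a j S :: nat
  assumes "a < S" "j < S"
  shows "(j + a) mod S = (if j + a < S then j + a else j + a - S)"
proof (cases "j + a < S")
  case True
  then show ?thesis by simp
next
  case False
  have "j + a = (j + a - S) + S" using False by simp
  then have "(j + a) mod S = (j + a - S) mod S" by (metis mod_add_self2)
  also have "\<dots> = j + a - S" using assms by (intro mod_less) simp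
  finally show ?thesis using False by simp
qed

lemma cyc_sum:
  fixes \<phi> :: "real \<Rightarrow> real"
  assumes sym: "\<And>y. \<phi> (1 - y) = \<phi> y" and a: "a < S"
  shows "(\<Sum>b<S. \<phi> (\<bar>real a - real b\<bar> / real S)) = (\<Sum>j<S. \<phi> (real j / real S))"
proof (rule sum.reindex_bij_witness[where i = "\<lambda>j. (j + a) mod S" and j = "\<lambda>b. (b + S - a) mod S"])
  fix b assume b: "b \<in> {..<S}"
  then have b': "b < S" by simp
  show "(b + S - a) mod S \<in> {..<S}" using a by simp
  show "((b + S - a) mod S + a) mod S = b"
  proof (cases "a \<le> b")
    case True
    then show ?thesis using mod_helper1[OF a b'] b' by simp
  next
    case False
    then have "(b + S - a) mod S + a = b + S" using mod_helper1[OF a b'] a by simp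
    then show ?thesis using b' by simp
  qed
  show "\<phi> (real ((b + S - a) mod S) / real S) = \<phi> (\<bar>real a - real b\<bar> / real S)"
  proof (cases "a \<le> b")
    case True
    then have "(b + S - a) mod S = b - a" using mod_helper1[OF a b'] by simp
    then show ?thesis using True by (simp add: of_nat_diff)
  next
    case False
    then have "(b + S - a) mod S = b + S - a" using mod_helper1[OF a b'] by simp
    moreover have "real (b + S - a) / real S = 1 - \<bar>real a - real b\<bar> / real S"
      using False a by (simp add: of_nat_diff field_simps)
    ultimately show ?thesis using sym by simp
  qed
next
  fix j assume j: "j \<in> {..<S}"
  then have j': "j < S" by simp
  show "(j + a) mod S \<in> {..<S}" using a by simp
  show "((j + a) mod S + S - a) mod S = j"
  proof (cases "j + a < S")
    case True
    then have "(j + a) mod S + S - a = j + S" using mod_helper2[OF a j'] by simp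
    then show ?thesis using j' by simp
  next
    case False
    then have "(j + a) mod S + S - a = j" using mod_helper2[OF a j'] by simp
    then show ?thesis using j' by simp
  qed
qed

lemma refl_sum:
  fixes f :: "nat \<Rightarrow> real"
  assumes sym: "\<And>j. j \<le> S \<Longrightarrow> f (S - j) = f j" and h: "h < S"
  shows "(\<Sum>j\<in>{S - h..<S}. f j) = (\<Sum>i\<in>{1..h}. f i)"
proof (rule sum.reindex_bij_witness[where i = "\<lambda>i. S - i" and j = "\<lambda>j. S - j"])
  fix j assume "j \<in> {S - h..<S}"
  then show "S - (S - j) = j" "S - j \<in> {1..h}" "f (S - j) = f j" using h sym by auto
next
  fix i assume "i \<in> {1..h}"
  then show "S - (S - i) = i" "S - i \<in> {S - h..<S}" using h by auto
qed

lemma split_odd: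
  fixes f :: "nat \<Rightarrow> real"
  assumes sym: "\<And>j. j \<le> S \<Longrightarrow> f (S - j) = f j" and S: "S = 2 * h + 1"
  shows "(\<Sum>j<S. f j) = f 0 + 2 * (\<Sum>i\<in>{1..h}. f i)"
proof -
  have e: "{..<S} = insert 0 ({1..h} \<union> {S - h..<S})" using S by auto
  have "(\<Sum>j<S. f j) = f 0 + ((\<Sum>i\<in>{1..h}. f i) + (\<Sum>j\<in>{S - h..<S}. f j))"
  proof -
    have u: "sum f ({1..h} \<union> {S - h..<S}) = sum f {1..h} + sum f {S - h..<S}"
      by (rule sum.union_disjoint) (use S in auto)
    show ?thesis unfolding e by (subst sum.insert) (use S u in auto)
  qed
  also have "(\<Sum>j\<in>{S - h..<S}. f j) = (\<Sum>i\<in>{1..h}. f i)"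
    by (rule refl_sum[where S=S and f=f and h=h, OF sym]) (use S in auto)
  finally show ?thesis by simp
qed

lemma split_even:
  fixes f :: "nat \<Rightarrow> real"
  assumes sym: "\<And>j. j \<le> S \<Longrightarrow> f (S - j) = f j" and S: "S = 2 * r" and r: "0 < r"
  shows "(\<Sum>j<S. f j) = f 0 + f r + 2 * (\<Sum>i\<in>{1..r - 1}. f i)"
proof -
  have e: "{..<S} = insert 0 (insert r ({1..r - 1} \<union> {S - (r - 1)..<S}))" using S r by auto
  have "(\<Sum>j<S. f j) = f 0 + (f r + ((\<Sum>i\<in>{1..r - 1}. f i) + (\<Sum>j\<in>{S - (r - 1)..<S}. f j)))"
  proof -
    have u: "sum f ({1..r - 1} \<union> {S - (r - 1)..<S}) = sum f {1..r - 1} + sum f {S - (r - 1)..<S}"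
      by (rule sum.union_disjoint) (use S r in auto)
    have n1: "0 \<notin> insert r ({1..r - 1} \<union> {S - (r - 1)..<S})" using S r by auto
    have n2: "r \<notin> ({1..r - 1} \<union> {S - (r - 1)..<S})" using S r by auto
    have fin: "finite ({1..r - 1} \<union> {S - (r - 1)..<S})" by simp
    have "sum f (insert 0 (insert r ({1..r - 1} \<union> {S - (r - 1)..<S}))) = f 0 + sum f (insert r ({1..r - 1} \<union> {S - (r - 1)..<S}))"
      by (rule sum.insert[OF _ n1]) (use fin in simp)
    also have "sum f (insert r ({1..r - 1} \<union> {S - (r - 1)..<S})) = f r + sum f ({1..r - 1} \<union> {S - (r - 1)..<S})"
      by (rule sum.insert[OF fin n2])
    finally show ?thesis unfolding e u .
  qed
  also have "(\<Sum>j\<in>{S - (r - 1)..<S}. f j) = (\<Sum>i\<in>{1..r - 1}. f i)"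
    by (rule refl_sum[where S=S and f=f and h="r - 1", OF sym]) (use S r in auto)
  finally show ?thesis by simp
qed

definition kap :: "nat \<Rightarrow> nat \<Rightarrow> (nat \<Rightarrow> nat) \<Rightarrow> nat \<Rightarrow> nat \<Rightarrow> real" where
  "kap p k s a b = (if k < p then (if a = b then 3/2 else 5/4)
      else 3/2 - \<bar>real a - real b\<bar> / real (s k) + (\<bar>real a - real b\<bar> / real (s k))^2)"

definition psi :: "real \<Rightarrow> real" where
  "psi y = ln (3/2 - y + y^2)"

lemma quad_pos: "0 < 3/2 - y + (y::real)^2"
proof -
  have "0 \<le> (y - 1/2)^2" by simp
  then show ?thesis by (simp add: power2_eq_square algebra_simps)
qed

lemma kap_pos: "0 < kap p k s a b"
  unfolding kap_def using quad_pos by auto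

lemma kap_diag: "kap p k s a a = 3/2"
  unfolding kap_def by simp

lemma psi_sym: "psi (1 - y) = psi y"
  unfolding psi_def by (simp add: power2_eq_square algebra_simps)

lemma qual_sum_nat:
  fixes u v :: real
  assumes "a < S"
  shows "(\<Sum>b<S. if a = b then u else v) = u + (real S - 1) * v"
proof -
  have "(\<Sum>b<S. if a = b then u else v) = (\<Sum>b<S. v + (if a = b then u - v else 0))"
    by (intro sum.cong) auto
  also have "\<dots> = real S * v + (u - v)"
    using assms by (simp add: sum.distrib)
  finally show ?thesis by (simp add: algebra_simps)
qed

lemma A_qual:
  assumes "k < p" "0 < s k"
  shows "(\<Sum>a<s k. \<Sum>b<s k. ln (kap p k s a b)) = real (s k) * (ln (3/2) + (real (s k) - 1) * ln (5/4))"
proof -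
  have "(\<Sum>a<s k. \<Sum>b<s k. ln (kap p k s a b)) = (\<Sum>a<s k. \<Sum>b<s k. if a = b then ln (3/2) else ln (5/4))"
    using assms(1) unfolding kap_def by (intro sum.cong refl) auto
  also have "\<dots> = (\<Sum>a<s k. ln (3/2) + (real (s k) - 1) * ln (5/4))"
    by (intro sum.cong refl qual_sum_nat) simp
  finally show ?thesis by simp
qed

lemma A_quant:
  assumes "\<not> k < p" "0 < s k"
  shows "(\<Sum>a<s k. \<Sum>b<s k. ln (kap p k s a b)) = real (s k) * (\<Sum>j<s k. psi (real j / real (s k)))"
proof -
  have "(\<Sum>a<s k. \<Sum>b<s k. ln (kap p k s a b)) = (\<Sum>a<s k. \<Sum>b<s k. psi (\<bar>real a - real b\<bar> / real (s k)))"
    using assms(1) unfolding kap_def psi_def by (intro sum.cong refl) auto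
  also have "\<dots> = (\<Sum>a<s k. \<Sum>j<s k. psi (real j / real (s k)))"
    by (intro sum.cong refl cyc_sum psi_sym) simp
  finally show ?thesis by simp
qed

lemma psi_split_odd:
  assumes "odd S"
  shows "(\<Sum>j<S. psi (real j / real S)) = ln (3/2) + 2 * (\<Sum>i\<in>{1..(S - 1) div 2}. psi (real i / real S))"
proof -
  have S: "S = 2 * ((S - 1) div 2) + 1" using assms by presburger
  have "(\<Sum>j<S. psi (real j / real S)) = psi (real 0 / real S) + 2 * (\<Sum>i\<in>{1..(S - 1) div 2}. psi (real i / real S))"
  proof (rule split_odd[OF _ S])
    fix j assume "j \<le> S"
    then have "real (S - j) / real S = 1 - real j / real S"
      using S by (simp add: of_nat_diff field_simps)
    then show "psi (real (S - j) / real S) = psi (real j / real S)" by (simp add: psi_sym)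
  qed
  then show ?thesis by (simp add: psi_def)
qed

lemma psi_split_even:
  assumes "even S" "0 < S"
  shows "(\<Sum>j<S. psi (real j / real S)) = ln (3/2) + ln (5/4) + 2 * (\<Sum>i\<in>{1..S div 2 - 1}. psi (real i / real S))"
proof -
  have S: "S = 2 * (S div 2)" using assms by simp
  have r: "0 < S div 2" using assms by presburger
  have "(\<Sum>j<S. psi (real j / real S)) = psi (real 0 / real S) + psi (real (S div 2) / real S) + 2 * (\<Sum>i\<in>{1..S div 2 - 1}. psi (real i / real S))"
  proof (rule split_even[OF _ S r])
    fix j assume "j \<le> S"
    then have "real (S - j) / real S = 1 - real j / real S"
      using assms by (simp add: of_nat_diff field_simps)
    then show "psi (real (S - j) / real S) = psi (real j / real S)" by (simp add: psi_sym)
  qed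
  moreover have "real (S div 2) / real S = 1/2"
  proof -
    have "real S = 2 * real (S div 2)" using arg_cong[OF S, of real] by simp
    then show ?thesis using assms by (simp add: field_simps)
  qed
  moreover have "psi (1/2) = ln (5/4)" unfolding psi_def by (simp add: power2_eq_square)
  moreover have "psi 0 = ln (3/2)" unfolding psi_def by simp
  ultimately show ?thesis by simp
qed

lemma kernel_prod:
  assumes "\<forall>k<m. 0 < s k"
  shows "QQ_kernel p m (transformed_row s p D i) (transformed_row s p D j) = (\<Prod>k<m. kap p k s (D i k) (D j k))"
  unfolding QQ_kernel_def
proof (rule prod.cong[OF refl])
  fix k assume k: "k \<in> {..<m}"
  show "(if k < p then if transformed_row s p D i k = transformed_row s p D j k then 3 / 2 else 5 / 4
         else 3 / 2 - \<bar>transformed_row s p D i k - transformed_row s p D j k\<bar> +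
              \<bar>transformed_row s p D i k - transformed_row s p D j k\<bar>\<^sup>2) = kap p k s (D i k) (D j k)"
  proof (cases "k < p")
    case True
    then show ?thesis unfolding kap_def transformed_row_def by simp
  next
    case False
    have sk: "0 < real (s k)" using assms k by simp
    have "transformed_row s p D i k - transformed_row s p D j k = (real (D i k) - real (D j k)) / real (s k)"
      unfolding transformed_row_def using False sk by (simp add: field_simps)
    then have "\<bar>transformed_row s p D i k - transformed_row s p D j k\<bar> = \<bar>real (D i k) - real (D j k)\<bar> / real (s k)"
      using sk by simp
    then show ?thesis using False unfolding kap_def by simp
  qed
qed

lemma V_qual:
  fixes n S L3 L5 :: real
  assumes "1 < n" "0 < S"
  shows "((n/S)^2 * (S * (L3 + (S - 1) * L5)) - (n/S) * (S * L3)) / (n * (n - 1))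
       = L5 + ((n - S) / (S * (n - 1))) * (L3 - L5)"
  using assms by (simp add: field_simps power2_eq_square)

lemma V_odd:
  fixes n S L3 X :: real
  assumes "1 < n" "0 < S"
  shows "((n/S)^2 * (S * (L3 + 2 * X)) - (n/S) * (S * L3)) / (n * (n - 1))
       = ((n - S) / (S * (n - 1))) * L3 + (2 * n / (S * (n - 1))) * X"
proof -
  have nz: "n \<noteq> 0" "n - 1 \<noteq> 0" "S \<noteq> 0" using assms by auto
  show ?thesis using nz by (simp add: divide_simps power2_eq_square) algebra
qed

lemma V_even:
  fixes n S L3 L5 X :: real
  assumes "1 < n" "0 < S"
  shows "((n/S)^2 * (S * (L3 + L5 + 2 * X)) - (n/S) * (S * L3)) / (n * (n - 1))
       = ((n - S) / (S * (n - 1))) * L3 + (n / (S * (n - 1))) * L5 + (2 * n / (S * (n - 1))) * X"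
proof -
  have nz: "n \<noteq> 0" "n - 1 \<noteq> 0" "S \<noteq> 0" using assms by auto
  show ?thesis using nz by (simp add: divide_simps power2_eq_square) algebra
qed

lemma base_eq:
  assumes "0 < S"
  shows "3/2 - 2 * real i * (2 * real S - 2 * real i) / (4 * (real S)^2) = 3/2 - real i / real S + (real i / real S)^2"
  using assms by (simp add: field_simps power2_eq_square)

lemma ln_g:
  assumes "0 < S"
  shows "ln ((3/2 - 2 * real i * (2 * real S - 2 * real i) / (4 * (real S)^2)) powr e) = e * psi (real i / real S)"
  unfolding base_eq[OF assms] psi_def by simp

lemma ln_65: "ln (6/5 :: real) = ln (3/2) - ln (5/4)"
proof -
  have "(6/5 :: real) = (3/2) / (5/4)" by simp
  then show ?thesis by (simp only: ln_div) simp
qed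

definition eL :: "nat \<Rightarrow> (nat \<Rightarrow> nat) \<Rightarrow> nat \<Rightarrow> real" where
  "eL n s k = (real n - real (s k)) / (real (s k) * (real n - 1))"

definition gL :: "nat \<Rightarrow> (nat \<Rightarrow> nat) \<Rightarrow> nat \<Rightarrow> nat \<Rightarrow> real" where
  "gL n s k i = (3/2 - 2 * real i * (2 * real (s k) - 2 * real i) / (4 * (real (s k))^2))
                      powr (2 * real n / (real (s k) * (real n - 1)))"

definition Pterm :: "nat \<Rightarrow> nat \<Rightarrow> nat \<Rightarrow> nat \<Rightarrow> (nat \<Rightarrow> nat) \<Rightarrow> real" where
  "Pterm n p q t s = (5/4)^p
           * (6/5) powr (\<Sum>k<p. eL n s k)
           * (3/2) powr (\<Sum>k\<in>{p..<p+q}. eL n s k)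
           * (5/4) powr (\<Sum>k\<in>{t..<p+q}. real n / (real (s k) * (real n - 1)))
           * (\<Prod>k\<in>{p..<t}. \<Prod>i\<in>{1..(s k - 1) div 2}. gL n s k i)
           * (\<Prod>k\<in>{t..<p+q}. \<Prod>i\<in>{1..s k div 2 - 1}. gL n s k i)"

definition colV :: "nat \<Rightarrow> nat \<Rightarrow> nat \<Rightarrow> (nat \<Rightarrow> nat) \<Rightarrow> nat \<Rightarrow> real" where
  "colV n p t s k = (if k < p then ln (5/4) + eL n s k * ln (6/5)
     else if k < t then eL n s k * ln (3/2) + (\<Sum>i\<in>{1..(s k - 1) div 2}. ln (gL n s k i))
     else eL n s k * ln (3/2) + real n / (real (s k) * (real n - 1)) * ln (5/4)
          + (\<Sum>i\<in>{1..s k div 2 - 1}. ln (gL n s k i)))"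

lemma LB1_eq: "LB1 n p q t s = -(\<Prod>k<p. (5 * real (s k) + 1) / (4 * real (s k))) * (4/3)^q
   + 1 / real n * (3/2)^(p+q) + (real n - 1) / real n * Pterm n p q t s"
  unfolding LB1_def Let_def Pterm_def eL_def gL_def by (simp only: mult.assoc)

lemma gL_pos: "0 < s k \<Longrightarrow> 0 < gL n s k i"
  unfolding gL_def using base_eq[of "s k" i] quad_pos[of "real i / real (s k)"] by simp

lemma ln_gL: "0 < s k \<Longrightarrow> ln (gL n s k i) = (2 * real n / (real (s k) * (real n - 1))) * psi (real i / real (s k))"
  unfolding gL_def by (rule ln_g)

lemma ln_prod_pos: "finite I \<Longrightarrow> (\<And>i. i \<in> I \<Longrightarrow> 0 < f i) \<Longrightarrow> ln (prod f I) = (\<Sum>i\<in>I. ln (f i :: real))"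
  by (rule ln_prod) (auto dest: less_imp_neq[symmetric])

lemma ln_prod2_pos:
  assumes "finite I" "\<And>i. i \<in> I \<Longrightarrow> finite (J i)" "\<And>i j. i \<in> I \<Longrightarrow> j \<in> J i \<Longrightarrow> 0 < f i j"
  shows "ln (\<Prod>i\<in>I. \<Prod>j\<in>J i. f i j) = (\<Sum>i\<in>I. \<Sum>j\<in>J i. ln (f i j :: real))"
proof -
  have "ln (\<Prod>i\<in>I. \<Prod>j\<in>J i. f i j) = (\<Sum>i\<in>I. ln (\<Prod>j\<in>J i. f i j))"
    using assms by (intro ln_prod_pos prod_pos) auto
  also have "\<dots> = (\<Sum>i\<in>I. \<Sum>j\<in>J i. ln (f i j))"
    using assms by (intro sum.cong refl ln_prod_pos) auto
  finally show ?thesis .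
qed

lemma lnP:
  assumes pt: "p \<le> t" and tq: "t \<le> p + q" and sp: "\<forall>k<p+q. 0 < s k"
  shows "ln (Pterm n p q t s) = (\<Sum>k<p+q. colV n p t s k)"
proof -
  define E1 where "E1 = (\<Sum>k<p. eL n s k)"
  define E2a where "E2a = (\<Sum>k\<in>{p..<t}. eL n s k)"
  define E2b where "E2b = (\<Sum>k\<in>{t..<p+q}. eL n s k)"
  define E3 where "E3 = (\<Sum>k\<in>{t..<p+q}. real n / (real (s k) * (real n - 1)))"
  define Q1 where "Q1 = (\<Prod>k\<in>{p..<t}. \<Prod>i\<in>{1..(s k - 1) div 2}. gL n s k i)"
  define Q2 where "Q2 = (\<Prod>k\<in>{t..<p+q}. \<Prod>i\<in>{1..s k div 2 - 1}. gL n s k i)"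
  have E2: "(\<Sum>k\<in>{p..<p+q}. eL n s k) = E2a + E2b"
    unfolding E2a_def E2b_def using pt tq by (simp add: sum.atLeastLessThan_concat)
  have gpos: "k < p + q \<Longrightarrow> 0 < gL n s k i" for k i using sp gL_pos by blast
  have Q1pos: "0 < Q1" unfolding Q1_def using pt tq by (intro prod_pos) (auto intro!: gpos)
  have Q2pos: "0 < Q2" unfolding Q2_def using pt tq by (intro prod_pos) (auto intro!: gpos)
  have lnQ1: "ln Q1 = (\<Sum>k\<in>{p..<t}. \<Sum>i\<in>{1..(s k - 1) div 2}. ln (gL n s k i))"
    unfolding Q1_def using tq by (intro ln_prod2_pos) (auto intro!: gpos)
  have lnQ2: "ln Q2 = (\<Sum>k\<in>{t..<p+q}. \<Sum>i\<in>{1..s k div 2 - 1}. ln (gL n s k i))"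
    unfolding Q2_def by (intro ln_prod2_pos) (auto intro!: gpos)
  have P: "Pterm n p q t s = (5/4)^p * (6/5) powr E1 * (3/2) powr (E2a + E2b) * (5/4) powr E3 * Q1 * Q2"
    unfolding Pterm_def E1_def E3_def Q1_def Q2_def E2 ..
  have "ln (Pterm n p q t s) = real p * ln (5/4) + E1 * ln (6/5) + (E2a + E2b) * ln (3/2) + E3 * ln (5/4) + ln Q1 + ln Q2"
    unfolding P using Q1pos Q2pos by (simp add: ln_mult ln_realpow zero_less_mult_iff)
  also have "\<dots> = (\<Sum>k<p+q. colV n p t s k)"
  proof -
    have split: "(\<Sum>k<p+q. colV n p t s k) = (\<Sum>k<p. colV n p t s k) + (\<Sum>k\<in>{p..<t}. colV n p t s k) + (\<Sum>k\<in>{t..<p+q}. colV n p t s k)"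
      using pt tq by (simp add: lessThan_atLeast0 sum.atLeastLessThan_concat)
    have s1: "(\<Sum>k<p. colV n p t s k) = real p * ln (5/4) + E1 * ln (6/5)"
      unfolding E1_def colV_def by (simp add: sum.distrib sum_distrib_right)
    have s2: "(\<Sum>k\<in>{p..<t}. colV n p t s k) = E2a * ln (3/2) + ln Q1"
      unfolding E2a_def colV_def lnQ1 by (simp add: sum.distrib sum_distrib_right)
    have s3: "(\<Sum>k\<in>{t..<p+q}. colV n p t s k) = E2b * ln (3/2) + E3 * ln (5/4) + ln Q2"
      unfolding E2b_def E3_def colV_def lnQ2 using pt by (simp add: sum.distrib sum_distrib_right)
    show ?thesis unfolding split s1 s2 s3 by (simp add: algebra_simps)
  qed
  finally show ?thesis .
qed


lemma colV_eq:
  assumes k: "k < p + q" and sk: "0 < s k" and n: "1 < n" and pt: "p \<le> t"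
    and odd: "k \<in> {p..<t} \<Longrightarrow> odd (s k)" and even: "k \<in> {t..<p+q} \<Longrightarrow> even (s k)"
  shows "((real n / real (s k))^2 * (\<Sum>a<s k. \<Sum>b<s k. ln (kap p k s a b))
          - (real n / real (s k)) * (real (s k) * ln (3/2))) / (real n * (real n - 1)) = colV n p t s k"
proof -
  let ?S = "real (s k)"
  let ?A = "(\<Sum>a<s k. \<Sum>b<s k. ln (kap p k s a b))"
  have n': "1 < real n" using n by simp
  have S': "0 < ?S" using sk by simp
  show ?thesis
  proof (cases "k < p")
    case True
    have "?A = ?S * (ln (3/2) + (?S - 1) * ln (5/4))" by (rule A_qual[where s=s, OF True sk])
    then show ?thesis using True
      unfolding colV_def eL_def ln_65 by (simp only: V_qual[OF n' S'] if_True)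
  next
    case False
    have A: "?A = ?S * (\<Sum>j<s k. psi (real j / ?S))" by (rule A_quant[where s=s, OF False sk])
    have gsum: "(\<Sum>i\<in>I. ln (gL n s k i)) = (2 * real n / (?S * (real n - 1))) * (\<Sum>i\<in>I. psi (real i / ?S))" for I
      by (simp add: ln_gL[where s=s and k=k, OF sk] sum_distrib_left)
    show ?thesis
    proof (cases "k < t")
      case True
      then have o: "odd (s k)" using odd False by simp
      show ?thesis
        unfolding A psi_split_odd[OF o] colV_def eL_def gsum using False True
        by (simp only: V_odd[OF n' S'] if_False if_True)
    next
      case False2: False
      then have ev: "even (s k)" using even k by simp
      show ?thesis
        unfolding A psi_split_even[OF ev sk[unfolded]] colV_def eL_def gsum using False False2
        by (simp only: V_even[OF n' S'] if_False if_True)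
    qed
  qed
qed

lemma Pterm_pos:
  assumes "\<forall>k<p+q. 0 < s k" "t \<le> p + q"
  shows "0 < Pterm n p q t s"
proof -
  have gpos: "k < p + q \<Longrightarrow> 0 < gL n s k i" for k i using assms gL_pos by blast
  have "0 < (\<Prod>k\<in>{p..<t}. \<Prod>i\<in>{1..(s k - 1) div 2}. gL n s k i)"
    using assms(2) by (intro prod_pos) (auto intro!: gpos)
  moreover have "0 < (\<Prod>k\<in>{t..<p+q}. \<Prod>i\<in>{1..s k div 2 - 1}. gL n s k i)"
    by (intro prod_pos) (auto intro!: gpos)
  ultimately show ?thesis unfolding Pterm_def by simp
qed

lemma col_term:
  assumes lt: "\<forall>i<n. D i k < s k"
    and bal: "\<forall>u<s k. \<forall>v<s k. card {i. i < n \<and> D i k = u} = card {i. i < n \<and> D i k = v}"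
    and S: "0 < s k"
  shows "(\<Sum>(i,j)\<in>Off n. ln (kap p k s (D i k) (D j k)))
    = (real n / real (s k))^2 * (\<Sum>a<s k. \<Sum>b<s k. ln (kap p k s a b)) - (real n / real (s k)) * (real (s k) * ln (3/2))"
proof -
  have c: "real (card {i. i < n \<and> D i k = 0}) = real n / real (s k)"
    using bal_n[where d="\<lambda>i. D i k", OF lt bal S] S by (simp add: field_simps)
  have B: "(\<Sum>a<s k. ln (kap p k s a a)) = real (s k) * ln (3/2)"
    by (simp add: kap_diag)
  show ?thesis
    using col_Off[where d="\<lambda>i. D i k" and h="\<lambda>a b. ln (kap p k s a b)", OF lt bal S]
    unfolding c B by simp
qed

theorem theorem3:
  fixes n p q t :: nat and s :: "nat \<Rightarrow> nat" and D :: "nat \<Rightarrow> nat \<Rightarrow> nat"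
  assumes "0 < n"
    and "U_type n (p + q) s D"
    and "p \<le> t" and "t \<le> p + q"
    and "\<forall>k\<in>{p..<t}. odd (s k)"
    and "\<forall>k\<in>{t..<p+q}. even (s k)"
  shows "QQD2 n p q s D \<ge> LB1 n p q t s"
proof -
  define m where "m = p + q"
  have lt: "\<forall>k<m. \<forall>i<n. D i k < s k"
    and bal: "\<forall>k<m. \<forall>u<s k. \<forall>v<s k. card {i. i < n \<and> D i k = u} = card {i. i < n \<and> D i k = v}"
    using assms(2) unfolding U_type_def m_def by blast+
  have spos: "\<forall>k<m. 0 < s k"
  proof (intro allI impI)
    fix k assume "k < m"
    then have "D 0 k < s k" using lt assms(1) by blast
    then show "0 < s k" by simp
  qed
  define x where "x = transformed_row s p D"
  define M where "M = (\<Prod>k<m. if k < p then (5 * real (s k) + 1) / (4 * real (s k)) else 4/3)"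
  define K where "K = QQ_kernel p m"
  define F where "F = F_measure s p m"
  have I1v: "(\<integral>t. (\<integral>z. K t z \<partial>F) \<partial>F) = M"
    unfolding M_def K_def F_def by (rule I1) (use spos in auto)
  have I2v: "(\<integral>t. K t (x i) \<partial>F) = M" if i: "i < n" for i
    unfolding M_def K_def F_def
  proof (rule I2)
    fix k assume k: "k < m" "k < p"
    then show "0 < s k \<and> x i k \<in> real ` {0..<s k}"
      using spos lt i unfolding x_def transformed_row_def by auto
  next
    fix k assume k: "k < m" "\<not> k < p"
    have "D i k < s k" using lt i k by auto
    then have "2 * real (D i k) + 1 \<le> 2 * real (s k)" by linarith
    then show "x i k \<in> {0..1}"
      using k spos unfolding x_def transformed_row_def by (auto simp: field_simps)
  qed
  have Kdiag: "K (x i) (x i) = (3/2)^m" for i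
    unfolding K_def x_def kernel_prod[OF spos] kap_diag by simp
  have Kpos: "0 < K (x i) (x j)" for i j
    unfolding K_def x_def kernel_prod[OF spos] by (intro prod_pos) (auto intro: kap_pos)
  define SS where "SS = (\<Sum>(i,j)\<in>Off n. K (x i) (x j))"
  have QQ: "QQD2 n p q s D = M - 2 / real n * (real n * M) + 1 / (real n)^2 * (real n * (3/2)^m + SS)"
  proof -
    have "(\<Sum>i<n. \<integral>t. K t (x i) \<partial>F) = real n * M" using I2v by simp
    moreover have "(\<Sum>i<n. \<Sum>j<n. K (x i) (x j)) = real n * (3/2)^m + SS"
      unfolding SS_def sum_Off[of "\<lambda>i j. K (x i) (x j)"] Kdiag by simp
    ultimately show ?thesis
      unfolding QQD2_def Let_def m_def[symmetric] x_def[symmetric] K_def[symmetric] F_def[symmetric] I1v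
      by simp
  qed
  have CM: "-(\<Prod>k<p. (5 * real (s k) + 1) / (4 * real (s k))) * (4/3)^q = - M"
  proof -
    let ?f = "\<lambda>k. if k < p then (5 * real (s k) + 1) / (4 * real (s k)) else 4/3"
    have cc: "(\<Prod>k\<in>{0..<p}. ?f k) * (\<Prod>k\<in>{p..<p+q}. ?f k) = (\<Prod>k\<in>{0..<p+q}. ?f k)"
      by (rule prod.atLeastLessThan_concat) simp_all
    have "M = (\<Prod>k<p. ?f k) * (\<Prod>k\<in>{p..<p+q}. ?f k)"
      unfolding M_def m_def lessThan_atLeast0 cc ..
    also have "(\<Prod>k<p. ?f k) = (\<Prod>k<p. (5 * real (s k) + 1) / (4 * real (s k)))"
      by (intro prod.cong) auto
    also have "(\<Prod>k\<in>{p..<p+q}. ?f k) = (\<Prod>k\<in>{p..<p+q}. 4/3)"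
      by (intro prod.cong) auto
    also have "\<dots> = (4/3)^q" by simp
    finally show ?thesis by simp
  qed
  have key: "real n * (real n - 1) * Pterm n p q t s \<le> SS"
  proof (cases "n = 1")
    case True
    have "Off n = {}" unfolding Off_def True by auto
    then show ?thesis unfolding True SS_def by simp
  next
    case False
    then have n2: "1 < n" using assms(1) by simp
    define N where "N = real (card (Off n))"
    have N: "N = real n * (real n - 1)" unfolding N_def card_Off using n2 by (simp add: of_nat_diff)
    have Npos: "0 < N" unfolding N using n2 by simp
    have ne: "Off n \<noteq> {}" using Npos unfolding N_def by auto
    have jen: "exp ((\<Sum>ij\<in>Off n. ln (case ij of (i, j) \<Rightarrow> K (x i) (x j))) / N) \<le> SS / N"
      unfolding N_def SS_def by (rule jensen_exp[OF finite_Off ne]) (auto intro: Kpos)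
    have "(\<Sum>ij\<in>Off n. ln (case ij of (i, j) \<Rightarrow> K (x i) (x j)))
        = (\<Sum>(i,j)\<in>Off n. \<Sum>k<m. ln (kap p k s (D i k) (D j k)))"
      unfolding K_def x_def kernel_prod[OF spos]
      by (intro sum.cong refl) (auto intro!: ln_prod_pos kap_pos)
    also have "\<dots> = (\<Sum>k<m. \<Sum>(i,j)\<in>Off n. ln (kap p k s (D i k) (D j k)))"
      unfolding case_prod_beta by (rule sum.swap)
    also have "\<dots> = (\<Sum>k<m. (real n / real (s k))^2 * (\<Sum>a<s k. \<Sum>b<s k. ln (kap p k s a b))
                   - (real n / real (s k)) * (real (s k) * ln (3/2)))"
    proof (rule sum.cong[OF refl])
      fix k assume "k \<in> {..<m}"
      then have k: "k < m" by simp
      show "(\<Sum>(i,j)\<in>Off n. ln (kap p k s (D i k) (D j k))) = (real n / real (s k))^2 * (\<Sum>a<s k. \<Sum>b<s k. ln (kap p k s a b))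
                   - (real n / real (s k)) * (real (s k) * ln (3/2))"
        by (rule col_term) (use lt bal spos k in blast)+
    qed
    finally have "(\<Sum>ij\<in>Off n. ln (case ij of (i, j) \<Rightarrow> K (x i) (x j))) / N
        = (\<Sum>k<m. ((real n / real (s k))^2 * (\<Sum>a<s k. \<Sum>b<s k. ln (kap p k s a b))
                   - (real n / real (s k)) * (real (s k) * ln (3/2))) / (real n * (real n - 1)))"
      unfolding N by (simp add: sum_divide_distrib)
    also have "\<dots> = (\<Sum>k<m. colV n p t s k)"
    proof (rule sum.cong[OF refl])
      fix k assume "k \<in> {..<m}"
      then have k: "k < m" by simp
      show "((real n / real (s k))^2 * (\<Sum>a<s k. \<Sum>b<s k. ln (kap p k s a b))
                   - (real n / real (s k)) * (real (s k) * ln (3/2))) / (real n * (real n - 1)) = colV n p t s k"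
        by (rule colV_eq) (use k spos n2 assms(3-6) in \<open>auto simp: m_def\<close>)
    qed
    also have "\<dots> = ln (Pterm n p q t s)"
      unfolding m_def by (rule lnP[symmetric]) (use assms(3,4) spos in \<open>auto simp: m_def\<close>)
    finally have "exp (ln (Pterm n p q t s)) \<le> SS / N" using jen by simp
    then have "Pterm n p q t s \<le> SS / N"
      using Pterm_pos[of p q s t n] spos assms(4) unfolding m_def by simp
    then show ?thesis using Npos unfolding N by (simp add: field_simps)
  qed
  have LB: "LB1 n p q t s = - M + 1 / real n * (3/2)^m + (real n - 1) / real n * Pterm n p q t s"
    unfolding LB1_eq CM m_def ..
  have "(real n - 1) / real n * Pterm n p q t s \<le> SS / (real n)^2"
  proof -
    have "(real n - 1) / real n * Pterm n p q t s = (real n * (real n - 1) * Pterm n p q t s) / (real n)^2"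
      using assms(1) by (simp add: power2_eq_square)
    also have "\<dots> \<le> SS / (real n)^2"
      using key by (intro divide_right_mono) auto
    finally show ?thesis .
  qed
  moreover have "QQD2 n p q s D = - M + 1 / real n * (3/2)^m + SS / (real n)^2"
    unfolding QQ using assms(1) by (simp add: field_simps power2_eq_square)
  ultimately show ?thesis unfolding LB by simp
qed

end
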